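(* Let $1<p<\infty$, let $q$ be defined by $\frac1p+\frac1q=1$, and let $n,m\ge 0$ be integers. If $n\equiv m\pmod 2$, then $$\binom{n+m}{\frac{n+m}{2}} \le \Big(\sum_{i=0}^{m}\binom{m}{i}^p\Big)^{1/p}\Big(\sum_{j=0}^{n}\binom{n}{j}^q\Big)^{1/q}.$$ If $n-m\equiv 1\pmod 2$, then $$\frac12\binom{n+m+1}{\frac{n+m+1}{2}} \le \Big(\sum_{i=0}^{m}\binom{m}{i}^p\Big)^{1/p}\Big(\sum_{j=0}^{n}\binom{n}{j}^q\Big)^{1/q}.$$
   Context: Binomial coefficients $\binom{n}{i}$ for integers $0\le i\le n$ have their usual meaning. *)

theory Defs
  imports Complex_Main
begin

end

theory Submission
  imports Defs "HOL-Analysis.Analysis"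
begin

lemma holder_fin:
  fixes a b :: "nat \<Rightarrow> real" and p q :: real and I :: "nat set"
  assumes fin: "finite I" and p: "1 < p" and q: "1 < q" and pq: "1 / p + 1 / q = 1"
    and a: "\<And>i. a i \<ge> 0" and b: "\<And>i. b i \<ge> 0"
  shows "(\<Sum>i\<in>I. a i * b i) \<le> (\<Sum>i\<in>I. a i powr p) powr (1/p) * (\<Sum>i\<in>I. b i powr q) powr (1/q)"
proof -
  define A where "A = (\<Sum>i\<in>I. a i powr p)"
  define B where "B = (\<Sum>i\<in>I. b i powr q)"
  have A0: "A \<ge> 0" unfolding A_def by (simp add: sum_nonneg)
  have B0: "B \<ge> 0" unfolding B_def by (simp add: sum_nonneg)
  show ?thesis
  proof (cases "A = 0 \<or> B = 0")
    case True
    then show ?thesis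
    proof
      assume "A = 0"
      then have "\<forall>i\<in>I. a i powr p = 0" using fin unfolding A_def
        by (subst sum_nonneg_eq_0_iff[symmetric]) auto
      then have "\<forall>i\<in>I. a i = 0" using p by auto
      then show ?thesis by (simp add: sum_nonneg)
    next
      assume "B = 0"
      then have "\<forall>i\<in>I. b i powr q = 0" using fin unfolding B_def
        by (subst sum_nonneg_eq_0_iff[symmetric]) auto
      then have "\<forall>i\<in>I. b i = 0" using q by auto
      then show ?thesis by (simp add: sum_nonneg)
    qed
  next
    case False
    then have Ap: "A > 0" and Bp: "B > 0" using A0 B0 by auto
    define \<alpha> where "\<alpha> = A powr (1/p)"
    define \<beta> where "\<beta> = B powr (1/q)"
    have \<alpha>p: "\<alpha> > 0" and \<beta>p: "\<beta> > 0" using Ap Bp by (auto simp: \<alpha>_def \<beta>_def)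
    have \<alpha>pp: "\<alpha> powr p = A" using Ap p by (simp add: \<alpha>_def powr_powr)
    have \<beta>qq: "\<beta> powr q = B" using Bp q by (simp add: \<beta>_def powr_powr)
    have each: "a i * b i / (\<alpha> * \<beta>) \<le> a i powr p / (A * p) + b i powr q / (B * q)" for i
    proof -
      have "(a i / \<alpha>) * (b i / \<beta>) \<le> (a i / \<alpha>) powr p / p + (b i / \<beta>) powr q / q"
        using Youngs_inequality[of p q "a i / \<alpha>" "b i / \<beta>"] p q pq a b \<alpha>p \<beta>p by auto
      also have "\<dots> = a i powr p / (A * p) + b i powr q / (B * q)"
        using a b \<alpha>p \<beta>p \<alpha>pp \<beta>qq by (simp add: powr_divide)
      finally show ?thesis by simp
    qed
    have "(\<Sum>i\<in>I. a i * b i) / (\<alpha> * \<beta>) = (\<Sum>i\<in>I. a i * b i / (\<alpha> * \<beta>))"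
      by (simp add: sum_divide_distrib)
    also have "\<dots> \<le> (\<Sum>i\<in>I. a i powr p / (A * p) + b i powr q / (B * q))"
      by (rule sum_mono) (rule each)
    also have "\<dots> = A / (A * p) + B / (B * q)"
      by (simp add: sum.distrib A_def B_def sum_divide_distrib)
    also have "\<dots> = 1" using Ap Bp pq by simp
    finally have "(\<Sum>i\<in>I. a i * b i) \<le> \<alpha> * \<beta>" using \<alpha>p \<beta>p by (simp add: divide_le_eq)
    then show ?thesis by (simp add: \<alpha>_def \<beta>_def A_def B_def)
  qed
qed

lemma general_bound:
  fixes p q :: real and n m r :: nat
  assumes "1 < p" and "1 / p + 1 / q = 1"
  shows "real ((n + m) choose r)
              \<le> (\<Sum>i=0..m. real (m choose i) powr p) powr (1 / p)
                 * (\<Sum>j=0..n. real (n choose j) powr q) powr (1 / q)"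
proof -
  have q: "1 < q"
  proof -
    have "1/q = 1 - 1/p" using assms by simp
    moreover have "0 < 1 - 1/p" "1 - 1/p < 1" using assms by auto
    ultimately have "0 < 1/q" "1/q < 1" by auto
    then show ?thesis by (simp add: divide_less_eq zero_less_divide_iff)
  qed
  define b where "b i = (if i \<le> r then real (n choose (r - i)) else 0)" for i
  have "real ((n + m) choose r) = real ((m + n) choose r)" by (simp add: add.commute)
  also have "\<dots> = (\<Sum>k\<le>r. real (m choose k) * real (n choose (r - k)))"
    by (subst vandermonde[symmetric]) simp
  also have "\<dots> = (\<Sum>k\<in>{0..m}. real (m choose k) * b k)"
  proof -
    have "(\<Sum>k\<le>r. real (m choose k) * real (n choose (r - k))) = (\<Sum>k\<in>{0..max m r}. real (m choose k) * b k)"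
      by (rule sum.mono_neutral_cong_left) (auto simp: b_def)
    also have "\<dots> = (\<Sum>k\<in>{0..m}. real (m choose k) * b k)"
      by (rule sum.mono_neutral_cong_right) (auto simp: b_def)
    finally show ?thesis .
  qed
  also have "\<dots> \<le> (\<Sum>i=0..m. real (m choose i) powr p) powr (1 / p) * (\<Sum>i=0..m. b i powr q) powr (1 / q)"
    by (rule holder_fin) (use assms q in \<open>auto simp: b_def\<close>)
  also have "\<dots> \<le> (\<Sum>i=0..m. real (m choose i) powr p) powr (1 / p) * (\<Sum>j=0..n. real (n choose j) powr q) powr (1 / q)"
  proof (rule mult_left_mono)
    have "(\<Sum>i=0..m. b i powr q) = (\<Sum>i\<in>{0..min m r}. real (n choose (r - i)) powr q)"
      by (rule sum.mono_neutral_cong_right) (auto simp: b_def)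
    also have "\<dots> = (\<Sum>j\<in>(\<lambda>i. r - i) ` {0..min m r}. real (n choose j) powr q)"
      by (subst sum.reindex) (auto simp: inj_on_def)
    also have "\<dots> = (\<Sum>j\<in>(\<lambda>i. r - i) ` {0..min m r} \<inter> {0..n}. real (n choose j) powr q)"
      by (rule sum.mono_neutral_cong_right) auto
    also have "\<dots> \<le> (\<Sum>j=0..n. real (n choose j) powr q)"
      by (rule sum_mono2) auto
    finally have "(\<Sum>i=0..m. b i powr q) \<le> (\<Sum>j=0..n. real (n choose j) powr q)" .
    moreover have "0 \<le> (\<Sum>i=0..m. b i powr q)" by (simp add: sum_nonneg)
    ultimately show "(\<Sum>i=0..m. b i powr q) powr (1 / q) \<le> (\<Sum>j=0..n. real (n choose j) powr q) powr (1 / q)"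
      using q by (intro powr_mono2) auto
  qed simp
  finally show ?thesis .
qed

theorem mainTheorem7:
  fixes p q :: real and n m :: nat
  assumes "1 < p" and "1 / p + 1 / q = 1"
  shows "(even (n + m) \<longrightarrow>
            real ((n + m) choose ((n + m) div 2))
              \<le> (\<Sum>i=0..m. real (m choose i) powr p) powr (1 / p)
                 * (\<Sum>j=0..n. real (n choose j) powr q) powr (1 / q))
       \<and> (odd (n + m) \<longrightarrow>
            (1 / 2) * real ((n + m + 1) choose ((n + m + 1) div 2))
              \<le> (\<Sum>i=0..m. real (m choose i) powr p) powr (1 / p)
                 * (\<Sum>j=0..n. real (n choose j) powr q) powr (1 / q))"
proof (intro conjI impI)
  show "real ((n + m) choose ((n + m) div 2))
              \<le> (\<Sum>i=0..m. real (m choose i) powr p) powr (1 / p)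
                 * (\<Sum>j=0..n. real (n choose j) powr q) powr (1 / q)"
    by (rule general_bound[OF assms])
next
  assume "odd (n + m)"
  then obtain c where c: "n + m = 2 * c + 1" using oddE by blast
  have "(n + m + 1) choose ((n + m + 1) div 2) = Suc (2*c+1) choose (Suc c)"
    using c by simp
  also have "\<dots> = ((2*c+1) choose c) + ((2*c+1) choose (Suc c))" by simp
  also have "(2*c+1) choose (Suc c) = (2*c+1) choose c"
    using binomial_symmetric[of "Suc c" "2*c+1"] by simp
  finally have "(1/2) * real ((n + m + 1) choose ((n + m + 1) div 2)) = real ((n+m) choose c)"
    using c by simp
  then show "(1 / 2) * real ((n + m + 1) choose ((n + m + 1) div 2))
              \<le> (\<Sum>i=0..m. real (m choose i) powr p) powr (1 / p)
                 * (\<Sum>j=0..n. real (n choose j) powr q) powr (1 / q)"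
    using general_bound[OF assms, of n m c] by simp
qed

end
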